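(* Take $N=1$, $\rho=0.35$, $Q=321$, $A=167$, $B=1.9$, $\alpha_1=0.32$, $\alpha_i=0.36$, $\alpha_2=0.8$, $T_c=0$, $D=0.25$, and any fixed $R>0$. Let $V$ be the piecewise vector field on $\mathbb R^3$ (coordinates $(T_0,T_2,\eta)$) defined below. Then for all sufficiently small $\varepsilon>0$, the system $(\dot T_0,\dot T_2,\dot\eta)=V(T_0,T_2,\eta)$ has an asymptotically stable equilibrium whose $\eta$-coordinate lies in the open interval $(0,\rho)$ (a "Jormungand" state: ice line in tropical latitudes, not a snowball state $\eta=0$).
   Context: $p_0(y)=1$, $p_2(y)=\tfrac12(3y^2-1)$. Let $s(y)=s_0+s_2p_2(y)$ with $s_0=1$, $s_2=-0.477$; $q_0=s$, $q_2=s\,p_2$. For $n=0,1$: \[ \overline b_{2n}(\eta)=\alpha_2 s_{2n}-(4n+1)(\alpha_2-\alpha_1)\int_0^\eta q_{2n}(y)\,dy, \] \[ \overline a_{2n}(\eta)=\alpha_2 s_{2n}-(4n+1)\Bigl((\alpha_2-\alpha_i)\int_\eta^\rho q_{2n}(y)\,dy+(\alpha_2-\alpha_1)\int_0^\eta q_{2n}(y)\,dy\Bigr), \] \[ f^{\mp}_0(\eta)=\tfrac1B\bigl(Q(s_0-\overline c_0(\eta))-A\bigr),\qquad f^{\mp}_{2}(\eta)=\frac{Q(s_{2}-\overline c_{2}(\eta))}{B+6D}, \] with $\overline c=\overline a$ for $f^-$ and $\overline c=\overline b$ for $f^+$. The vector fields $V^\pm$ are \[ \dot T_0=-\tfrac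 BR\bigl(T_0-f^\pm_0(\eta)\bigr),\quad \dot T_2=-\tfrac{B+6D}{R}\bigl(T_2-f^\pm_2(\eta)\bigr),\quad \dot\eta=\varepsilon\bigl(T_0+T_2p_2(\eta)-T_c\bigr), \] and $V=V^-$ on $\{\eta<\rho\}$, $V=V^+$ on $\{\eta\ge\rho\}$. (This corresponds to the Jormungand albedo: for $\eta<\rho$, albedo $\alpha_1$ for $y<\eta$, $\alpha_i$ for $\eta<y<\rho$, $\alpha_2$ for $y>\rho$; for $\eta\ge\rho$, albedo $\alpha_1$ for $y<\eta$, $\alpha_2$ for $y>\eta$.) *)

theory Defs
  imports "HOL-Analysis.Analysis"
begin

definition rho :: real where "rho = 0.35"
definition Qc :: real where "Qc = 321"
definition Ac :: real where "Ac = 167"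
definition Bc :: real where "Bc = 1.9"
definition alpha1 :: real where "alpha1 = 0.32"
definition alphai :: real where "alphai = 0.36"
definition alpha2 :: real where "alpha2 = 0.8"
definition Tc :: real where "Tc = 0"
definition Dc :: real where "Dc = 0.25"
definition s0 :: real where "s0 = 1"
definition s2 :: real where "s2 = -0.477"

definition p2 :: "real \<Rightarrow> real" where "p2 y = (3 * y^2 - 1) / 2"
definition s :: "real \<Rightarrow> real" where "s y = s0 + s2 * p2 y"
definition q0 :: "real \<Rightarrow> real" where "q0 y = s y"
definition q2 :: "real \<Rightarrow> real" where "q2 y = s y * p2 y"

definition sint :: "real \<Rightarrow> real \<Rightarrow> (real \<Rightarrow> real) \<Rightarrow> real" where
  "sint a b f = (if a \<le> b then integral {a..b} f else - integral {b..a} f)"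

definition bbar0 :: "real \<Rightarrow> real" where
  "bbar0 \<eta> = alpha2 * s0 - 1 * (alpha2 - alpha1) * sint 0 \<eta> q0"
definition bbar2 :: "real \<Rightarrow> real" where
  "bbar2 \<eta> = alpha2 * s2 - 5 * (alpha2 - alpha1) * sint 0 \<eta> q2"
definition abar0 :: "real \<Rightarrow> real" where
  "abar0 \<eta> = alpha2 * s0 - 1 * ((alpha2 - alphai) * sint \<eta> rho q0 + (alpha2 - alpha1) * sint 0 \<eta> q0)"
definition abar2 :: "real \<Rightarrow> real" where
  "abar2 \<eta> = alpha2 * s2 - 5 * ((alpha2 - alphai) * sint \<eta> rho q2 + (alpha2 - alpha1) * sint 0 \<eta> q2)"

definition fminus0 :: "real \<Rightarrow> real" where "fminus0 \<eta> = (Qc * (s0 - abar0 \<eta>) - Ac) / Bc"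
definition fminus2 :: "real \<Rightarrow> real" where "fminus2 \<eta> = Qc * (s2 - abar2 \<eta>) / (Bc + 6 * Dc)"
definition fplus0 :: "real \<Rightarrow> real" where "fplus0 \<eta> = (Qc * (s0 - bbar0 \<eta>) - Ac) / Bc"
definition fplus2 :: "real \<Rightarrow> real" where "fplus2 \<eta> = Qc * (s2 - bbar2 \<eta>) / (Bc + 6 * Dc)"

definition Vfield :: "(real \<Rightarrow> real) \<Rightarrow> (real \<Rightarrow> real) \<Rightarrow> real \<Rightarrow> real
    \<Rightarrow> real \<times> real \<times> real \<Rightarrow> real \<times> real \<times> real" where
  "Vfield f0 f2 R \<epsilon> z = (case z of (T0, T2, \<eta>) \<Rightarrow>
     (- (Bc / R) * (T0 - f0 \<eta>),
      - ((Bc + 6 * Dc) / R) * (T2 - f2 \<eta>),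
      \<epsilon> * (T0 + T2 * p2 \<eta> - Tc)))"

definition Vminus :: "real \<Rightarrow> real \<Rightarrow> real \<times> real \<times> real \<Rightarrow> real \<times> real \<times> real" where
  "Vminus R \<epsilon> = Vfield fminus0 fminus2 R \<epsilon>"
definition Vplus :: "real \<Rightarrow> real \<Rightarrow> real \<times> real \<times> real \<Rightarrow> real \<times> real \<times> real" where
  "Vplus R \<epsilon> = Vfield fplus0 fplus2 R \<epsilon>"

definition V :: "real \<Rightarrow> real \<Rightarrow> real \<times> real \<times> real \<Rightarrow> real \<times> real \<times> real" where
  "V R \<epsilon> z = (if snd (snd z) < rho then Vminus R \<epsilon> z else Vplus R \<epsilon> z)"

definition is_solution_on :: "('a::real_normed_vector \<Rightarrow> 'a) \<Rightarrow> (real \<Rightarrow> 'a) \<Rightarrow> real set \<Rightarrow> bool" where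
  "is_solution_on F x I \<longleftrightarrow> (\<forall>t\<in>I. (x has_vector_derivative F (x t)) (at t within I))"

definition lyapunov_stable :: "('a::real_normed_vector \<Rightarrow> 'a) \<Rightarrow> 'a \<Rightarrow> bool" where
  "lyapunov_stable F p \<longleftrightarrow>
     (\<forall>e>0. \<exists>d>0. \<forall>x T. 0 \<le> T \<longrightarrow> is_solution_on F x {0..T} \<longrightarrow> dist (x 0) p < d \<longrightarrow>
        (\<forall>t\<in>{0..T}. dist (x t) p < e))"

definition locally_attractive :: "('a::real_normed_vector \<Rightarrow> 'a) \<Rightarrow> 'a \<Rightarrow> bool" where
  "locally_attractive F p \<longleftrightarrow>
     (\<exists>d>0. \<forall>x0. dist x0 p < d \<longrightarrow>
        (\<exists>x. is_solution_on F x {0..} \<and> x 0 = x0) \<and>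
        (\<forall>x. is_solution_on F x {0..} \<longrightarrow> x 0 = x0 \<longrightarrow> (x \<longlongrightarrow> p) at_top))"

definition asymptotically_stable_equilibrium :: "('a::real_normed_vector \<Rightarrow> 'a) \<Rightarrow> 'a \<Rightarrow> bool" where
  "asymptotically_stable_equilibrium F p \<longleftrightarrow>
     F p = 0 \<and> lyapunov_stable F p \<and> locally_attractive F p"

end

theory Submission
  imports Defs
begin

lemma integral_deriv_from0:
  fixes g :: "real \<Rightarrow> 'a::banach"
  assumes "continuous_on UNIV g" "0 \<le> u"
  shows "((\<lambda>u. integral {0..u} g) has_vector_derivative g u) (at u within {0..})"
proof -
  have "((\<lambda>u. integral {0..u} g) has_vector_derivative g u) (at u within {0..u+1})"
    by (rule integral_has_vector_derivative) (use assms in \<open>auto intro: continuous_on_subset\<close>)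
  moreover have "at u within {0..u+1} = at u within {0..}"
    by (rule at_within_nhd[where S="{u - 1 <..< u + 1}"]) auto
  ultimately show ?thesis by simp
qed

lemma exp_integral:
  fixes k t :: real assumes "0 < k" "0 \<le> t"
  shows "((\<lambda>w. exp (k*w)) has_integral (exp (k*t) - 1) / k) {0..t}"
proof -
  have "((\<lambda>w. exp (k*w)) has_integral (exp (k*t)/k - exp (k*0)/k)) {0..t}"
    apply (rule fundamental_theorem_of_calculus)
    using assms apply simp
    using assms apply (auto intro!: derivative_eq_intros simp: has_real_derivative_iff_has_vector_derivative[symmetric])
    done
  then show ?thesis by (simp add: diff_divide_distrib)
qed

lemma int_bound:
  fixes g :: "real \<Rightarrow> 'a::banach"
  assumes "0 < k" "0 \<le> t" "continuous_on {0..t} g" "\<And>w. w \<in> {0..t} \<Longrightarrow> norm (g w) \<le> C * exp (k*w)"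
  shows "norm (integral {0..t} g) \<le> C * ((exp (k*t) - 1) / k)"
proof -
  have hi: "((\<lambda>w. C * exp (k*w)) has_integral C * ((exp (k*t) - 1) / k)) {0..t}"
    by (rule has_integral_mult_right[OF exp_integral[OF assms(1,2)]])
  have "norm (integral {0..t} g) \<le> integral {0..t} (\<lambda>w. C * exp (k*w))"
    by (rule integral_norm_bound_integral) (use assms hi in \<open>auto intro: integrable_continuous_interval\<close>)
  also have "\<dots> = C * ((exp (k*t) - 1) / k)" using hi by (rule integral_unique)
  finally show ?thesis .
qed

lemma decay_factor:
  fixes k t C :: real
  assumes "0 < k" "0 \<le> t" "0 \<le> C"
  shows "exp (-k*t) * (C * ((exp (k*t) - 1) / k)) \<le> C / k"
proof -
  have "exp (-k*t) * (C * ((exp (k*t) - 1) / k)) = C * (1 - exp (-k*t)) / k"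
    by (simp add: field_simps exp_minus exp_add[symmetric])
  also have "\<dots> \<le> C / k" using assms by (intro divide_right_mono) (auto intro!: mult_left_le)
  finally show ?thesis .
qed

lemma ode_exists:
  fixes G :: "'a::banach \<Rightarrow> 'a" and L :: real
  assumes Lpos: "0 < L" and Lip: "\<And>z z'. norm (G z - G z') \<le> L * norm (z - z')"
  shows "\<exists>x. is_solution_on G x {0..} \<and> x 0 = x0"
proof -
  define k where "k = 2*L"
  have kpos: "0 < k" using Lpos by (simp add: k_def)
  have contG: "continuous_on UNIV G"
    apply (rule lipschitz_on_continuous_on[where L=L])
    using Lip Lpos by (auto simp: lipschitz_on_def dist_norm)
  define fy where "fy y w = G (exp (k*w) *\<^sub>R apply_bcontfun y w)" for y :: "real \<Rightarrow>\<^sub>C 'a" and w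
  have contf: "continuous_on UNIV (fy y)" for y
    unfolding fy_def by (rule continuous_on_compose2[OF contG]) (auto intro!: continuous_intros)
  have contJ: "continuous_on {0..} (\<lambda>u. integral {0..u} g)" if "continuous_on UNIV g" for g :: "real \<Rightarrow> 'a"
    unfolding continuous_on_eq_continuous_within
    using has_vector_derivative_continuous[OF integral_deriv_from0[OF that]] by auto
  define P where "P y t = exp (-k * max 0 t) *\<^sub>R (x0 + integral {0..max 0 t} (fy y))" for y t
  have Pcont: "continuous_on UNIV (P y)" for y
  proof -
    have "continuous_on UNIV (\<lambda>t. integral {0..max 0 t} (fy y))"
      by (rule continuous_on_compose2[OF contJ[OF contf]]) (auto intro!: continuous_intros)
    then show ?thesis unfolding P_def by (auto intro!: continuous_intros)
  qed
  have Pbcont: "P y \<in> bcontfun" for y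
  proof -
    obtain B where B: "\<And>w. norm (apply_bcontfun y w) \<le> B"
      using bounded_apply_bcontfun[of y] unfolding bounded_iff by auto
    have B0: "0 \<le> B" using B[of 0] norm_ge_zero order_trans by blast
    define C where "C = norm (G 0) + L * B"
    have C0: "0 \<le> C" using B0 Lpos by (simp add: C_def)
    have fb: "norm (fy y w) \<le> C * exp (k*w)" if "0 \<le> w" for w
    proof -
      have "norm (fy y w) \<le> norm (G 0) + norm (fy y w - G 0)" by (metis norm_triangle_sub add.commute)
      also have "norm (fy y w - G 0) \<le> L * norm (exp (k*w) *\<^sub>R apply_bcontfun y w)"
        using Lip[of "exp (k*w) *\<^sub>R apply_bcontfun y w" 0] by (simp add: fy_def)
      also have "\<dots> \<le> L * (exp (k*w) * B)" using B[of w] Lpos by (auto intro!: mult_left_mono)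
      finally have "norm (fy y w) \<le> norm (G 0) + L * (exp (k*w) * B)" by simp
      also have "\<dots> \<le> norm (G 0) * exp (k*w) + L * (exp (k*w) * B)"
        using that kpos by (auto intro!: mult_left_le_one_le simp: mult_le_cancel_left1)
      finally show ?thesis by (simp add: C_def algebra_simps)
    qed
    show ?thesis
    proof (rule bcontfun_normI[OF Pcont])
      fix t :: real
      let ?m = "max 0 t"
      have "norm (P y t) = exp (-k * ?m) * norm (x0 + integral {0..?m} (fy y))"
        by (simp add: P_def)
      also have "\<dots> \<le> exp (-k * ?m) * (norm x0 + C * ((exp (k*?m) - 1) / k))"
        by (intro mult_left_mono norm_triangle_le add_left_mono int_bound[OF kpos])
           (auto intro: fb continuous_on_subset[OF contf])
      also have "\<dots> = exp (-k * ?m) * norm x0 + exp (-k * ?m) * (C * ((exp (k*?m) - 1) / k))"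
        by (simp add: algebra_simps)
      also have "\<dots> \<le> norm x0 + C / k"
        using decay_factor[OF kpos _ C0, of ?m] kpos
        by (intro add_mono) (auto intro!: mult_left_le_one_le)
      finally show "norm (P y t) \<le> norm x0 + C / k" .
    qed
  qed
  define \<Phi> where "\<Phi> y = Bcontfun (P y)" for y
  have Phi_app: "apply_bcontfun (\<Phi> y) = P y" for y
    unfolding \<Phi>_def using Pbcont by (simp add: Bcontfun_inverse)
  have contr: "dist (\<Phi> y1) (\<Phi> y2) \<le> (1/2) * dist y1 y2" for y1 y2
  proof (rule dist_bound)
    fix t :: real
    let ?m = "max 0 t"
    let ?D = "dist y1 y2"
    have D0: "0 \<le> ?D" by simp
    have fb: "norm (fy y1 w - fy y2 w) \<le> (L * ?D) * exp (k*w)" for w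
    proof -
      have "norm (fy y1 w - fy y2 w) \<le> L * norm (exp (k*w) *\<^sub>R apply_bcontfun y1 w - exp (k*w) *\<^sub>R apply_bcontfun y2 w)"
        unfolding fy_def by (rule Lip)
      also have "\<dots> = L * (exp (k*w) * dist (apply_bcontfun y1 w) (apply_bcontfun y2 w))"
        by (simp add: dist_norm scaleR_diff_right[symmetric])
      also have "\<dots> \<le> L * (exp (k*w) * ?D)" using Lpos by (auto intro!: mult_left_mono dist_bounded)
      finally show ?thesis by (simp add: algebra_simps)
    qed
    have ieq: "integral {0..?m} (fy y1) - integral {0..?m} (fy y2) = integral {0..?m} (\<lambda>w. fy y1 w - fy y2 w)"
      by (rule integral_diff[symmetric]) (auto intro!: integrable_continuous_interval continuous_on_subset[OF contf])
    have "dist (apply_bcontfun (\<Phi> y1) t) (apply_bcontfun (\<Phi> y2) t) = exp (-k * ?m) * norm (integral {0..?m} (fy y1) - integral {0..?m} (fy y2))"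
      unfolding Phi_app P_def dist_norm by (simp add: scaleR_diff_right[symmetric])
    also have "\<dots> \<le> exp (-k * ?m) * ((L * ?D) * ((exp (k*?m) - 1) / k))"
      unfolding ieq
      by (intro mult_left_mono int_bound[OF kpos]) (auto intro: fb continuous_intros continuous_on_subset[OF contf])
    also have "\<dots> \<le> (L * ?D) / k" by (rule decay_factor[OF kpos]) (use Lpos in auto)
    also have "\<dots> = (1/2) * ?D" using Lpos by (simp add: k_def)
    finally show "dist (apply_bcontfun (\<Phi> y1) t) (apply_bcontfun (\<Phi> y2) t) \<le> (1/2) * ?D" .
  qed
  obtain y where yfix: "\<Phi> y = y" using banach_fix_type[of "1/2" \<Phi>] contr by auto
  define x where "x t = exp (k*t) *\<^sub>R apply_bcontfun y t" for t
  have xeq: "x t = x0 + integral {0..t} (\<lambda>w. G (x w))" if "0 \<le> t" for t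
  proof -
    have "apply_bcontfun y t = P y t" using yfix Phi_app by metis
    then have "apply_bcontfun y t = exp (-k*t) *\<^sub>R (x0 + integral {0..t} (\<lambda>w. G (x w)))"
      using that by (simp add: P_def fy_def[abs_def] x_def[abs_def] max_def)
    then show ?thesis by (simp add: x_def exp_minus[symmetric] exp_add[symmetric])
  qed
  have contGx: "continuous_on UNIV (\<lambda>w. G (x w))"
    using contf[of y] by (simp add: fy_def x_def[abs_def])
  have "is_solution_on G x {0..}"
    unfolding is_solution_on_def
  proof
    fix t :: real assume t: "t \<in> {0..}"
    have "((\<lambda>t. x0 + integral {0..t} (\<lambda>w. G (x w))) has_vector_derivative G (x t)) (at t within {0..})"
      using integral_deriv_from0[OF contGx, of t] t by (auto intro!: derivative_eq_intros)
    then show "(x has_vector_derivative G (x t)) (at t within {0..})"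
      by (rule has_vector_derivative_transform_within[where d=1]) (use t xeq in auto)
  qed
  moreover have "x 0 = x0" using xeq[of 0] by simp
  ultimately show ?thesis by blast
qed

lemma sint_antideriv:
  assumes "\<And>x. (P has_real_derivative f x) (at x)"
  shows "sint a b f = P b - P a"
proof -
  have I: "integral {c..d} f = P d - P c" if "c \<le> d" for c d
    apply (rule integral_unique, rule fundamental_theorem_of_calculus[OF that])
    using assms by (auto simp: has_real_derivative_iff_has_vector_derivative[symmetric] intro: has_field_derivative_at_within)
  show ?thesis unfolding sint_def using I[of a b] I[of b a] by auto
qed

definition I0 :: "real \<Rightarrow> real" where "I0 y = y + s2 * (y^3/2 - y/2)"
definition I2 :: "real \<Rightarrow> real" where "I2 y = (y^3/2 - y/2) + s2 * (9/20*y^5 - y^3/2 + y/4)"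

lemma I0_deriv: "(I0 has_real_derivative q0 x) (at x)"
  unfolding I0_def[abs_def] q0_def s_def p2_def s0_def
  by (auto intro!: derivative_eq_intros simp: field_simps)

lemma I2_deriv: "(I2 has_real_derivative q2 x) (at x)"
  unfolding I2_def[abs_def] q2_def s_def p2_def s0_def
  by (auto intro!: derivative_eq_intros simp: field_simps power2_eq_square power4_eq_xxxx)

lemma sint0: "sint a b q0 = I0 b - I0 a" by (rule sint_antideriv[OF I0_deriv])
lemma sint2: "sint a b q2 = I2 b - I2 a" by (rule sint_antideriv[OF I2_deriv])

definition F0 :: "real \<Rightarrow> real" where
  "F0 y = -17208106841/760000000 + 795117/95000*y - 153117/95000*y^3"
definition F2 :: "real \<Rightarrow> real" where
  "F2 y = -51878091740481/1088000000000 - 795117/68000*y + 474117/34000*y^3 - 1378053/340000*y^5"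

lemma fminus0_eq: "fminus0 y = F0 y"
  unfolding fminus0_def abar0_def sint0 I0_def F0_def Qc_def Ac_def Bc_def alpha1_def alphai_def alpha2_def s0_def s2_def rho_def
  by (simp add: field_simps)

lemma fminus2_eq: "fminus2 y = F2 y"
  unfolding fminus2_def abar2_def sint2 I2_def F2_def Qc_def Ac_def Bc_def Dc_def alpha1_def alphai_def alpha2_def s0_def s2_def rho_def
  by (simp add: field_simps)

definition F0d :: "real \<Rightarrow> real" where "F0d y = 795117/95000 - 3*153117/95000*y^2"
definition F2d :: "real \<Rightarrow> real" where
  "F2d y = - 795117/68000 + 3*474117/34000*y^2 - 5*1378053/340000*y^4"
definition hh :: "real \<Rightarrow> real" where "hh y = F0 y + F2 y * p2 y"
definition hhd :: "real \<Rightarrow> real" where "hhd y = F0d y + F2d y * p2 y + F2 y * (3*y)"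

lemma F0_deriv: "(F0 has_real_derivative F0d x) (at x)"
  unfolding F0_def[abs_def] F0d_def by (auto intro!: derivative_eq_intros simp: field_simps power2_eq_square)
lemma F2_deriv: "(F2 has_real_derivative F2d x) (at x)"
  unfolding F2_def[abs_def] F2d_def by (auto intro!: derivative_eq_intros simp: field_simps power2_eq_square power4_eq_xxxx)
lemma p2_deriv: "(p2 has_real_derivative 3*x) (at x)"
  unfolding p2_def[abs_def] by (auto intro!: derivative_eq_intros simp: field_simps power2_eq_square)
lemma hh_deriv: "(hh has_real_derivative hhd x) (at x)"
  unfolding hh_def[abs_def] hhd_def
  by (auto intro!: derivative_eq_intros F0_deriv F2_deriv p2_deriv simp: field_simps)

lemma pow_bounds:
  fixes y :: real assumes "a \<le> y" "y \<le> b" "0 \<le> a"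
  shows "a^n \<le> y^n \<and> y^n \<le> b^n"
  using assms by (auto intro: power_mono)

lemma region_bounds:
  fixes y :: real assumes "23/100 \<le> y" "y \<le> 26/100"
  shows "\<bar>F0d y\<bar> \<le> 20" "\<bar>F2d y\<bar> \<le> 20" "-52 \<le> F2 y" "F2 y \<le> -48"
    "-1/2 \<le> p2 y" "p2 y \<le> -39/100" "-41 \<le> hhd y" "hhd y \<le> -17"
proof -
  have y2: "(23/100)^2 \<le> y^2 \<and> y^2 \<le> (26/100::real)^2" by (rule pow_bounds) (use assms in auto)
  have y3: "(23/100)^3 \<le> y^3 \<and> y^3 \<le> (26/100::real)^3" by (rule pow_bounds) (use assms in auto)
  have y4: "(23/100)^4 \<le> y^4 \<and> y^4 \<le> (26/100::real)^4" by (rule pow_bounds) (use assms in auto)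
  have y5: "(23/100)^5 \<le> y^5 \<and> y^5 \<le> (26/100::real)^5" by (rule pow_bounds) (use assms in auto)
  note y2 = y2[simplified power_divide, simplified] and y3 = y3[simplified power_divide, simplified]
     and y4 = y4[simplified power_divide, simplified] and y5 = y5[simplified power_divide, simplified]
  show a: "\<bar>F0d y\<bar> \<le> 20" using y2 unfolding F0d_def by auto
  show b: "\<bar>F2d y\<bar> \<le> 20" using y2 y4 unfolding F2d_def by auto
  show c: "-52 \<le> F2 y" "F2 y \<le> -48" using assms y3 y5 unfolding F2_def by auto
  show d: "-1/2 \<le> p2 y" "p2 y \<le> -39/100" using y2 unfolding p2_def by auto
  have e1: "8 \<le> F0d y" "F0d y \<le> 82/10" using y2 unfolding F0d_def by auto
  have e2: "-10 \<le> F2d y" "F2d y \<le> -85/10" using y2 y4 unfolding F2d_def by auto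
  have e3: "0 \<le> F2d y * p2 y" "F2d y * p2 y \<le> 5"
  proof -
    show "0 \<le> F2d y * p2 y" using e2 d by (intro mult_nonpos_nonpos) auto
    have "F2d y * p2 y = (- F2d y) * (- p2 y)" by simp
    also have "\<dots> \<le> 10 * (1/2)" using e2 d by (intro mult_mono) auto
    finally show "F2d y * p2 y \<le> 5" by simp
  qed
  have e4: "-41 \<le> F2 y * (3*y)" "F2 y * (3*y) \<le> -33"
  proof -
    have "(- F2 y) * (3*y) \<le> 52 * (78/100)" using c assms by (intro mult_mono) auto
    then show "-41 \<le> F2 y * (3*y)" by (simp add: algebra_simps)
    have "48 * (69/100) \<le> (- F2 y) * (3*y)" using c assms by (intro mult_mono) auto
    then show "F2 y * (3*y) \<le> -33" by (simp add: algebra_simps)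
  qed
  show "-41 \<le> hhd y" "hhd y \<le> -17" unfolding hhd_def using e1 e3 e4 by linarith+
qed

lemma hh_vals: "hh (24/100) > 0" "hh (25/100) < 0"
  unfolding hh_def F0_def F2_def p2_def by (simp_all add: power_divide)

lemma hh_root: "\<exists>e. 24/100 \<le> e \<and> e \<le> 25/100 \<and> hh e = 0"
proof -
  have "continuous_on {24/100..25/100} hh"
    using hh_deriv by (auto intro!: continuous_at_imp_continuous_on DERIV_isCont)
  then show ?thesis using IVT2'[of hh "25/100" 0 "24/100"] hh_vals by auto
qed

lemma hh_mvt:
  assumes "hh e = 0" "24/100 \<le> e" "e \<le> 25/100" "\<bar>y - e\<bar> \<le> 1/100"
  shows "\<exists>z. 23/100 \<le> z \<and> z \<le> 26/100 \<and> hh y = (y - e) * hhd z"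
proof (cases "y = e")
  case True then show ?thesis using assms by (intro exI[of _ e]) auto
next
  case False
  show ?thesis
  proof (cases "e < y")
    case True
    from MVT2[OF True hh_deriv] obtain z where "e < z" "z < y" "hh y - hh e = (y - e) * hhd z" by blast
    then show ?thesis using assms by (intro exI[of _ z]) auto
  next
    case False
    then have "y < e" using \<open>y \<noteq> e\<close> by auto
    from MVT2[OF this hh_deriv] obtain z where "y < z" "z < e" "hh e - hh y = (e - y) * hhd z" by blast
    then show ?thesis using assms by (intro exI[of _ z]) (auto simp: algebra_simps)
  qed
qed

lemma hh_slope:
  assumes "hh e = 0" "24/100 \<le> e" "e \<le> 25/100" "\<bar>y - e\<bar> \<le> 1/100"
  shows "hh y * (y - e) \<le> -17 * (y - e)^2" "\<bar>hh y\<bar> \<le> 41 * \<bar>y - e\<bar>"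
proof -
  obtain z where z: "23/100 \<le> z" "z \<le> 26/100" "hh y = (y - e) * hhd z" using hh_mvt[OF assms] by blast
  have b: "-41 \<le> hhd z" "hhd z \<le> -17" using region_bounds[OF z(1,2)] by auto
  have "hh y * (y - e) = hhd z * (y - e)^2" unfolding z(3) by (simp add: power2_eq_square algebra_simps)
  also have "\<dots> \<le> -17 * (y - e)^2" using b by (intro mult_right_mono) auto
  finally show "hh y * (y - e) \<le> -17 * (y - e)^2" .
  have "\<bar>hh y\<bar> = \<bar>hhd z\<bar> * \<bar>y - e\<bar>" using z(3) by (simp add: abs_mult)
  also have "\<dots> \<le> 41 * \<bar>y - e\<bar>" using b by (intro mult_right_mono) auto
  finally show "\<bar>hh y\<bar> \<le> 41 * \<bar>y - e\<bar>" .
qed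

lemma key_ineq:
  fixes u v w H P A0 A2 b0 b2 \<epsilon> b :: real
  assumes a0: "\<bar>A0\<bar> \<le> 20" and a2: "\<bar>A2\<bar> \<le> 20" and pP: "\<bar>P\<bar> \<le> 1"
    and hw: "H*w \<le> -17*w^2" and hb: "\<bar>H\<bar> \<le> 41*\<bar>w\<bar>"
    and bb: "b \<le> b0" "b \<le> b2" and ep: "0 < \<epsilon>" "79380*\<epsilon> \<le> b"
  shows "2*u*(-b0*u - A0*(\<epsilon>*(H+u+v *P))) + 2* v *(-b2* v - A2*(\<epsilon>*(H+u+v *P))) + 2*w*(\<epsilon>*(H+u+v *P))
         \<le> -(17*\<epsilon>)*(u^2+v^2+w^2)"
proof -
  define \<phi> where "\<phi> = H+u+v *P"
  define S where "S = \<bar>u\<bar>+\<bar>v\<bar>"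
  define X where "X = A0*u + A2* v"
  have S0: "0 \<le> S" by (simp add: S_def)
  have lhs: "2*u*(-b0*u - A0*(\<epsilon>*(H+u+v *P))) + 2* v *(-b2* v - A2*(\<epsilon>*(H+u+v *P))) + 2*w*(\<epsilon>*(H+u+v *P))
      = -2*b0*u^2 - 2*b2* v^2 - 2*\<epsilon>*(\<phi>*X) + 2*\<epsilon>*(H*w) + 2*\<epsilon>*(w*(u+v *P))"
    by (simp add: \<phi>_def X_def power2_eq_square algebra_simps)
  have t1: "-2*b0*u^2 - 2*b2* v^2 \<le> -2*b*(u^2+v^2)"
    using bb by (simp add: algebra_simps) (intro add_mono mult_right_mono; simp)
  have vP: "\<bar>v *P\<bar> \<le> \<bar>v\<bar>" using pP by (simp add: abs_mult mult_left_le)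
  have X: "\<bar>X\<bar> \<le> 20*S"
  proof -
    have "\<bar>X\<bar> \<le> \<bar>A0\<bar>*\<bar>u\<bar> + \<bar>A2\<bar>*\<bar>v\<bar>" unfolding X_def by (metis abs_mult abs_triangle_ineq)
    also have "\<dots> \<le> 20*\<bar>u\<bar> + 20*\<bar>v\<bar>" using a0 a2 by (intro add_mono mult_right_mono) auto
    finally show ?thesis by (simp add: S_def algebra_simps)
  qed
  have ph: "\<bar>\<phi>\<bar> \<le> 41*\<bar>w\<bar> + S" unfolding \<phi>_def S_def using hb vP by linarith
  have t2: "-(\<phi>*X) \<le> (41*\<bar>w\<bar> + S)*(20*S)"
  proof -
    have "-(\<phi>*X) \<le> \<bar>\<phi>\<bar>*\<bar>X\<bar>" by (simp add: abs_mult[symmetric])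
    also have "\<dots> \<le> (41*\<bar>w\<bar> + S)*(20*S)" using ph X by (intro mult_mono) auto
    finally show ?thesis .
  qed
  have t3: "w*(u+v *P) \<le> \<bar>w\<bar>*S"
  proof -
    have "w*(u+v *P) \<le> \<bar>w\<bar>*\<bar>u+v *P\<bar>" by (simp add: abs_mult[symmetric])
    also have "\<dots> \<le> \<bar>w\<bar>*S" using vP unfolding S_def by (intro mult_left_mono) auto
    finally show ?thesis .
  qed
  have t4: "1642*(\<bar>w\<bar>*S) \<le> 17*w^2 + 39650*S^2"
  proof -
    have "0 \<le> (17*\<bar>w\<bar> - 821*S)^2" by simp
    then have "27914*(\<bar>w\<bar>*S) \<le> 289*w^2 + 674041*S^2" by (simp add: power2_eq_square algebra_simps)
    moreover have "0 \<le> S^2" by simp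
    ultimately show ?thesis by linarith
  qed
  have t5: "S^2 \<le> 2*(u^2+v^2)"
  proof -
    have "0 \<le> (\<bar>u\<bar> - \<bar>v\<bar>)^2" by simp
    then show ?thesis unfolding S_def by (simp add: power2_eq_square algebra_simps)
  qed
  have br: "- (\<phi>*X) + (H*w) + w*(u+v *P) \<le> 39690*(u^2+v^2) - 17/2*w^2"
  proof -
    have "- (\<phi>*X) + (H*w) + w*(u+v *P) \<le> (41*\<bar>w\<bar> + S)*(20*S) + (-17*w^2) + \<bar>w\<bar>*S"
      using t2 t3 hw by linarith
    also have "\<dots> = 821*(\<bar>w\<bar>*S) + 20*S^2 - 17*w^2" by (simp add: power2_eq_square algebra_simps)
    also have "\<dots> \<le> 39690*(u^2+v^2) - 17/2*w^2" using t4 t5 by linarith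
    finally show ?thesis .
  qed
  have "2*\<epsilon>*(- (\<phi>*X) + (H*w) + w*(u+v *P)) \<le> 2*\<epsilon>*(39690*(u^2+v^2) - 17/2*w^2)"
    using br ep by (intro mult_left_mono) auto
  moreover have "0 \<le> (2*b - 79397*\<epsilon>)*(u^2+v^2)" using ep by (intro mult_nonneg_nonneg) auto
  ultimately show ?thesis unfolding lhs using t1 by (simp add: algebra_simps)
qed

lemma vd_components:
  fixes x :: "real \<Rightarrow> real \<times> real \<times> real"
  assumes "(x has_vector_derivative X) F"
  shows "((\<lambda>t. fst (x t)) has_real_derivative fst X) F"
    "((\<lambda>t. fst (snd (x t))) has_real_derivative fst (snd X)) F"
    "((\<lambda>t. snd (snd (x t))) has_real_derivative snd (snd X)) F"
proof -
  have d: "(x has_derivative (\<lambda>h. h *\<^sub>R X)) F" using assms by (simp add: has_vector_derivative_def)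
  have "((\<lambda>t. fst (x t)) has_derivative (\<lambda>h. fst (h *\<^sub>R X))) F"
    by (rule bounded_linear.has_derivative[OF bounded_linear_fst d])
  then show "((\<lambda>t. fst (x t)) has_real_derivative fst X) F"
    by (simp add: has_field_derivative_def mult_commute_abs)
  have "((\<lambda>t. fst (snd (x t))) has_derivative (\<lambda>h. fst (snd (h *\<^sub>R X)))) F"
    by (rule bounded_linear.has_derivative[OF bounded_linear_fst bounded_linear.has_derivative[OF bounded_linear_snd d]])
  then show "((\<lambda>t. fst (snd (x t))) has_real_derivative fst (snd X)) F"
    by (simp add: has_field_derivative_def mult_commute_abs)
  have "((\<lambda>t. snd (snd (x t))) has_derivative (\<lambda>h. snd (snd (h *\<^sub>R X)))) F"
    by (rule bounded_linear.has_derivative[OF bounded_linear_snd bounded_linear.has_derivative[OF bounded_linear_snd d]])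
  then show "((\<lambda>t. snd (snd (x t))) has_real_derivative snd (snd X)) F"
    by (simp add: has_field_derivative_def mult_commute_abs)
qed

lemma F0_chain: "(g has_real_derivative g') (at t within S) \<Longrightarrow> ((\<lambda>t. F0 (g t)) has_real_derivative F0d (g t) * g') (at t within S)"
  by (rule DERIV_chain2[OF F0_deriv])
lemma F2_chain: "(g has_real_derivative g') (at t within S) \<Longrightarrow> ((\<lambda>t. F2 (g t)) has_real_derivative F2d (g t) * g') (at t within S)"
  by (rule DERIV_chain2[OF F2_deriv])

definition Wf :: "real \<Rightarrow> real \<times> real \<times> real \<Rightarrow> real" where
  "Wf e z = (fst z - F0 (snd (snd z)))^2 + (fst (snd z) - F2 (snd (snd z)))^2 + (snd (snd z) - e)^2"

lemma Wf_cont: "continuous_on UNIV (Wf e)"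
  unfolding Wf_def[abs_def] F0_def F2_def by (intro continuous_intros)

lemma Vminus_eq: "Vminus R \<epsilon> z = (-(Bc/R)*(fst z - F0 (snd (snd z))), -((Bc+6*Dc)/R)*(fst (snd z) - F2 (snd (snd z))),
     \<epsilon>*(fst z + fst (snd z) * p2 (snd (snd z)) - Tc))"
  by (cases z) (simp add: Vminus_def Vfield_def fminus0_eq[abs_def] fminus2_eq[abs_def])

definition goodE :: "real \<Rightarrow> bool" where "goodE e \<longleftrightarrow> hh e = 0 \<and> 24/100 \<le> e \<and> e \<le> 25/100"

lemma W_deriv:
  assumes R: "0 < R" and ep: "0 < \<epsilon>" "79380*\<epsilon> \<le> Bc/R" and e: "goodE e"
    and xd: "(x has_vector_derivative Vminus R \<epsilon> (x t)) (at t within S)"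
    and reg: "\<bar>snd (snd (x t)) - e\<bar> \<le> 1/100"
  shows "\<exists>D. ((\<lambda>t. Wf e (x t)) has_real_derivative D) (at t within S) \<and> D \<le> -(17*\<epsilon>) * Wf e (x t)"
proof -
  define a where "a = fst (x t)"
  define c where "c = fst (snd (x t))"
  define y where "y = snd (snd (x t))"
  note cs = vd_components[OF xd, unfolded Vminus_eq, simplified]
  define b0 where "b0 = Bc/R"
  define b2 where "b2 = (Bc+6*Dc)/R"
  define D where "D = 2*(a - F0 y)*(-b0*(a - F0 y) - F0d y * (\<epsilon>*(a + c*p2 y - Tc)))
     + 2*(c - F2 y)*(-b2*(c - F2 y) - F2d y * (\<epsilon>*(a + c*p2 y - Tc))) + 2*(y - e)*(\<epsilon>*(a + c*p2 y - Tc))"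
  have "((\<lambda>t. Wf e (x t)) has_real_derivative D) (at t within S)"
    unfolding Wf_def D_def a_def c_def y_def b0_def b2_def
    by (auto intro!: derivative_eq_intros F0_chain F2_chain cs simp: algebra_simps diff_divide_distrib add_divide_distrib)
  moreover have "D \<le> -(17*\<epsilon>) * Wf e (x t)"
  proof -
    have yr: "23/100 \<le> y" "y \<le> 26/100" using reg e unfolding y_def goodE_def abs_le_iff by linarith+
    note rb = region_bounds[OF yr]
    have sl: "hh y * (y - e) \<le> -17 * (y - e)^2" "\<bar>hh y\<bar> \<le> 41 * \<bar>y - e\<bar>"
      using hh_slope[of e y] e reg by (auto simp: goodE_def y_def)
    have sl1: "hh y * (y - e) \<le> -17 * (y - e)^2" using sl(1) .
    have "a + c*p2 y - Tc = hh y + (a - F0 y) + (c - F2 y)*p2 y"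
      by (simp add: hh_def Tc_def algebra_simps)
    note eqq = this
    have De: "D = 2*(a - F0 y)*(-b0*(a - F0 y) - F0d y*(\<epsilon>*(hh y + (a - F0 y) + (c - F2 y)*p2 y)))
       + 2*(c - F2 y)*(-b2*(c - F2 y) - F2d y*(\<epsilon>*(hh y + (a - F0 y) + (c - F2 y)*p2 y)))
       + 2*(y - e)*(\<epsilon>*(hh y + (a - F0 y) + (c - F2 y)*p2 y))"
      unfolding D_def eqq by simp
    have bb: "Bc/R \<le> b0" "Bc/R \<le> b2" using R by (auto simp: b0_def b2_def Bc_def Dc_def divide_simps)
    have "D \<le> -(17*\<epsilon>)*((a - F0 y)^2 + (c - F2 y)^2 + (y - e)^2)"
      unfolding De
      by (rule key_ineq[where b="Bc/R"]) (use rb sl bb ep in \<open>auto simp: abs_le_iff\<close>)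
    then show ?thesis by (simp add: Wf_def a_def c_def y_def)
  qed
  ultimately show ?thesis by blast
qed

lemma sol_cont:
  assumes "is_solution_on F x S" shows "continuous_on S x"
  using assms unfolding is_solution_on_def continuous_on_eq_continuous_within
  by (auto intro: has_vector_derivative_continuous)

lemma region_of_W:
  assumes "Wf e z < 1/10000" shows "\<bar>snd (snd z) - e\<bar> < 1/100"
proof -
  have "(snd (snd z) - e)^2 < 1/10000" using assms zero_le_power2[of "fst z - F0 (snd (snd z))"]
    zero_le_power2[of "fst (snd z) - F2 (snd (snd z))"] unfolding Wf_def by linarith
  then have "\<bar>snd (snd z) - e\<bar>^2 < (1/100)^2" by (simp add: power2_abs power_divide)
  then show ?thesis by (rule power_less_imp_less_base) simp
qed

lemma mono_step:
  assumes R: "0 < R" and ep: "0 < \<epsilon>" "79380*\<epsilon> \<le> Bc/R" and e: "goodE e"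
    and sol: "is_solution_on F x {0..T}"
    and agree: "\<And>z. Wf e z < 1/10000 \<Longrightarrow> F z = Vminus R \<epsilon> z"
    and t1: "0 \<le> t1" "t1 \<le> T"
    and inreg: "\<And>r. 0 \<le> r \<Longrightarrow> r < t1 \<Longrightarrow> Wf e (x r) < 1/10000"
  shows "Wf e (x t1) * exp (17*\<epsilon>*t1) \<le> Wf e (x 0)"
proof -
  define g where "g r = Wf e (x r) * exp (17*\<epsilon>*r)" for r
  have "g t1 \<le> g 0"
  proof (rule DERIV_nonpos_imp_decreasing_open[OF t1(1)])
    fix r assume r: "0 < r" "r < t1"
    have sT: "r \<in> {0..T}" using r t1 by auto
    have xd: "(x has_vector_derivative F (x r)) (at r within {0..T})"
      using sol sT by (auto simp: is_solution_on_def)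
    have "at r within {0..T} = at r"
      by (rule at_within_interior) (use r t1 in auto)
    then have xd': "(x has_vector_derivative Vminus R \<epsilon> (x r)) (at r)"
      using xd agree[OF inreg[of r]] r by auto
    have reg: "\<bar>snd (snd (x r)) - e\<bar> \<le> 1/100" using region_of_W[OF inreg[of r]] r by auto
    obtain D where D: "((\<lambda>t. Wf e (x t)) has_real_derivative D) (at r)" "D \<le> -(17*\<epsilon>) * Wf e (x r)"
      using W_deriv[OF R ep e xd' reg] by blast
    have "(g has_real_derivative D * exp (17*\<epsilon>*r) + Wf e (x r) * (exp (17*\<epsilon>*r) * (17*\<epsilon>))) (at r)"
      unfolding g_def[abs_def] by (auto intro!: derivative_eq_intros D(1))
    moreover have "D * exp (17*\<epsilon>*r) + Wf e (x r) * (exp (17*\<epsilon>*r) * (17*\<epsilon>)) \<le> 0"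
    proof -
      have "D * exp (17*\<epsilon>*r) \<le> (-(17*\<epsilon>) * Wf e (x r)) * exp (17*\<epsilon>*r)"
        using D(2) by (intro mult_right_mono) auto
      then show ?thesis by (simp add: algebra_simps)
    qed
    ultimately show "\<exists>y. (g has_real_derivative y) (at r) \<and> y \<le> 0" by blast
  next
    have "continuous_on {0..t1} x" using sol_cont[OF sol] t1 by (auto intro: continuous_on_subset)
    then show "continuous_on {0..t1} g"
      unfolding g_def by (intro continuous_intros continuous_on_compose2[OF Wf_cont]) auto
  qed
  then show ?thesis by (simp add: g_def)
qed

lemma decay:
  assumes R: "0 < R" and ep: "0 < \<epsilon>" "79380*\<epsilon> \<le> Bc/R" and e: "goodE e"
    and sol: "is_solution_on F x {0..T}"
    and agree: "\<And>z. Wf e z < 1/10000 \<Longrightarrow> F z = Vminus R \<epsilon> z"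
    and W0: "Wf e (x 0) < 1/10000"
    and t: "t \<in> {0..T}"
  shows "Wf e (x t) < 1/10000" "Wf e (x t) \<le> Wf e (x 0) * exp (-(17*\<epsilon>)*t)"
proof -
  have inv: "\<forall>r\<in>{0..T}. Wf e (x r) < 1/10000"
  proof (rule ccontr)
    assume nt: "\<not> (\<forall>r\<in>{0..T}. Wf e (x r) < 1/10000)"
    define A where "A = {0..T} \<inter> (\<lambda>r. Wf e (x r)) -` {1/10000..}"
    have Ane: "A \<noteq> {}" using nt by (auto simp: A_def not_less)
    have Acl: "closed A" unfolding A_def
      by (rule continuous_closed_preimage) (auto intro: continuous_on_compose2[OF Wf_cont sol_cont[OF sol]])
    have Abd: "bdd_below A" by (auto simp: A_def bdd_below_def)
    define t1 where "t1 = Inf A"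
    have t1A: "t1 \<in> A" using closed_contains_Inf[OF Ane Abd Acl] by (simp add: t1_def)
    have t1r: "0 \<le> t1" "t1 \<le> T" using t1A by (auto simp: A_def)
    have inr: "Wf e (x r) < 1/10000" if "0 \<le> r" "r < t1" for r
    proof (rule ccontr)
      assume "\<not> Wf e (x r) < 1/10000"
      then have "r \<in> A" using that t1r by (auto simp: A_def)
      then have "t1 \<le> r" unfolding t1_def using Abd by (rule cInf_lower)
      then show False using that by simp
    qed
    have "Wf e (x t1) * exp (17*\<epsilon>*t1) \<le> Wf e (x 0)"
      by (rule mono_step[OF R ep e sol agree t1r inr])
    moreover have "Wf e (x t1) \<le> Wf e (x t1) * exp (17*\<epsilon>*t1)"
    proof -
      have "1 \<le> exp (17*\<epsilon>*t1)" using t1r ep by simp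
      moreover have "0 \<le> Wf e (x t1)" by (simp add: Wf_def)
      ultimately show ?thesis using mult_left_mono[of 1 "exp (17*\<epsilon>*t1)" "Wf e (x t1)"] by simp
    qed
    moreover have "1/10000 \<le> Wf e (x t1)" using t1A by (auto simp: A_def)
    ultimately show False using W0 by linarith
  qed
  have "Wf e (x t) * exp (17*\<epsilon>*t) \<le> Wf e (x 0)"
    by (rule mono_step[OF R ep e sol agree]) (use t inv in auto)
  then show "Wf e (x t) \<le> Wf e (x 0) * exp (-(17*\<epsilon>)*t)"
    by (simp add: exp_minus field_simps)
  show "Wf e (x t) < 1/10000" using inv t by auto
qed

lemma lip_region:
  fixes f f' :: "real \<Rightarrow> real"
  assumes d: "\<And>x. (f has_real_derivative f' x) (at x)"
    and bd: "\<And>x. 23/100 \<le> x \<Longrightarrow> x \<le> 26/100 \<Longrightarrow> \<bar>f' x\<bar> \<le> M"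
    and ab: "23/100 \<le> a" "a \<le> 26/100" "23/100 \<le> b" "b \<le> 26/100"
  shows "\<bar>f a - f b\<bar> \<le> M * \<bar>a - b\<bar>"
proof -
  have *: "\<bar>f y - f x\<bar> \<le> M * \<bar>y - x\<bar>" if xy: "x < y" "23/100 \<le> x" "y \<le> 26/100" for x y
  proof -
    obtain z where z: "x < z" "z < y" "f y - f x = (y - x) * f' z" using MVT2[OF xy(1), of f f'] d by blast
    have "\<bar>f y - f x\<bar> = \<bar>f' z\<bar> * \<bar>y - x\<bar>" using z(3) by (simp add: abs_mult)
    also have "\<dots> \<le> M * \<bar>y - x\<bar>" using bd[of z] z xy by (intro mult_right_mono) auto
    finally show ?thesis .
  qed
  show ?thesis
  proof (cases a b rule: linorder_cases)
    case less then show ?thesis using *[of a b] ab by (simp add: abs_minus_commute)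
  next
    case equal then show ?thesis using bd[of a] ab by simp
  next
    case greater then show ?thesis using *[of b a] ab by simp
  qed
qed

lemma F0_lip: "23/100 \<le> a \<Longrightarrow> a \<le> 26/100 \<Longrightarrow> 23/100 \<le> b \<Longrightarrow> b \<le> 26/100 \<Longrightarrow> \<bar>F0 a - F0 b\<bar> \<le> 20 * \<bar>a - b\<bar>"
  by (rule lip_region[OF F0_deriv]) (use region_bounds in auto)
lemma F2_lip: "23/100 \<le> a \<Longrightarrow> a \<le> 26/100 \<Longrightarrow> 23/100 \<le> b \<Longrightarrow> b \<le> 26/100 \<Longrightarrow> \<bar>F2 a - F2 b\<bar> \<le> 20 * \<bar>a - b\<bar>"
  by (rule lip_region[OF F2_deriv]) (use region_bounds in auto)
lemma p2_lip: "23/100 \<le> a \<Longrightarrow> a \<le> 26/100 \<Longrightarrow> 23/100 \<le> b \<Longrightarrow> b \<le> 26/100 \<Longrightarrow> \<bar>p2 a - p2 b\<bar> \<le> 1 * \<bar>a - b\<bar>"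
  by (rule lip_region[OF p2_deriv]) auto

definition clE :: "real \<Rightarrow> real" where "clE y = max (23/100) (min (26/100) y)"
definition clT :: "real \<Rightarrow> real" where "clT y = max (-60) (min (-40) y)"

lemma clE_props: "23/100 \<le> clE y" "clE y \<le> 26/100" "\<bar>clE a - clE b\<bar> \<le> \<bar>a - b\<bar>"
  by (auto simp: clE_def max_def min_def abs_le_iff)
lemma clT_props: "\<bar>clT y\<bar> \<le> 60" "\<bar>clT a - clT b\<bar> \<le> \<bar>a - b\<bar>"
  by (auto simp: clT_def max_def min_def abs_le_iff)

definition Gf :: "real \<Rightarrow> real \<Rightarrow> real \<times> real \<times> real \<Rightarrow> real \<times> real \<times> real" where
  "Gf R \<epsilon> z = (-(Bc/R)*(fst z - F0 (clE (snd (snd z)))), -((Bc+6*Dc)/R)*(fst (snd z) - F2 (clE (snd (snd z)))),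
     \<epsilon>*(fst z + clT (fst (snd z)) * p2 (clE (snd (snd z))) - Tc))"

lemma norm3: "norm (z :: real \<times> real \<times> real) \<le> \<bar>fst z\<bar> + \<bar>fst (snd z)\<bar> + \<bar>snd (snd z)\<bar>"
proof -
  have "norm z \<le> norm (fst z) + norm (snd z)" using norm_Pair_le[of "fst z" "snd z"] by simp
  also have "norm (snd z) \<le> norm (fst (snd z)) + norm (snd (snd z))" using norm_Pair_le[of "fst (snd z)" "snd (snd z)"] by simp
  finally show ?thesis by simp
qed

lemma comp_le: "\<bar>fst (z :: real \<times> real \<times> real)\<bar> \<le> norm z" "\<bar>fst (snd z)\<bar> \<le> norm z" "\<bar>snd (snd z)\<bar> \<le> norm z"
proof -
  show "\<bar>fst z\<bar> \<le> norm z" using norm_fst_le[of "fst z" "snd z"] by simp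
  have s: "norm (snd z) \<le> norm z" using norm_snd_le[of "snd z" "fst z"] by simp
  show "\<bar>fst (snd z)\<bar> \<le> norm z" using norm_fst_le[of "fst (snd z)" "snd (snd z)"] s by simp
  show "\<bar>snd (snd z)\<bar> \<le> norm z" using norm_snd_le[of "snd (snd z)" "fst (snd z)"] s by simp
qed

lemma Gf_lip:
  assumes R: "0 < R" and ep: "0 < \<epsilon>"
  shows "norm (Gf R \<epsilon> z - Gf R \<epsilon> z') \<le> (21*(Bc/R) + 21*((Bc+6*Dc)/R) + 62*\<epsilon>) * norm (z - z')"
proof -
  define N where "N = norm (z - z')"
  define ya where "ya = clE (snd (snd z))"
  define yb where "yb = clE (snd (snd z'))"
  have b0: "0 \<le> Bc/R" "0 \<le> (Bc+6*Dc)/R" using R by (auto simp: Bc_def Dc_def)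
  have dT0: "\<bar>fst z - fst z'\<bar> \<le> N" using comp_le(1)[of "z - z'"] by (simp add: N_def)
  have dT2: "\<bar>fst (snd z) - fst (snd z')\<bar> \<le> N" using comp_le(2)[of "z - z'"] by (simp add: N_def)
  have dy: "\<bar>ya - yb\<bar> \<le> N" using comp_le(3)[of "z - z'"] clE_props(3)[of "snd (snd z)" "snd (snd z')"]
    by (simp add: N_def ya_def yb_def)
  have yab: "23/100 \<le> ya" "ya \<le> 26/100" "23/100 \<le> yb" "yb \<le> 26/100" using clE_props by (auto simp: ya_def yb_def)
  have f0: "\<bar>F0 ya - F0 yb\<bar> \<le> 20 * N" using F0_lip[OF yab] mult_left_mono[OF dy, of 20] by linarith
  have f2: "\<bar>F2 ya - F2 yb\<bar> \<le> 20 * N" using F2_lip[OF yab] mult_left_mono[OF dy, of 20] by linarith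
  have pp: "\<bar>p2 ya - p2 yb\<bar> \<le> N" using p2_lip[OF yab] dy by simp
  have pa: "\<bar>p2 ya\<bar> \<le> 1" using region_bounds[OF yab(1,2)] by auto
  define ca where "ca = clT (fst (snd z))"
  define cb where "cb = clT (fst (snd z'))"
  have dc: "\<bar>ca - cb\<bar> \<le> N" using clT_props(2) dT2 unfolding ca_def cb_def by (rule order_trans)
  have cb6: "\<bar>cb\<bar> \<le> 60" using clT_props(1) by (simp add: cb_def)
  have prod: "\<bar>ca * p2 ya - cb * p2 yb\<bar> \<le> N + 60 * N"
  proof -
    have "ca * p2 ya - cb * p2 yb = (ca - cb) * p2 ya + cb * (p2 ya - p2 yb)" by (simp add: algebra_simps)
    also have "\<bar>\<dots>\<bar> \<le> \<bar>ca - cb\<bar> * \<bar>p2 ya\<bar> + \<bar>cb\<bar> * \<bar>p2 ya - p2 yb\<bar>"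
      by (metis abs_mult abs_triangle_ineq)
    also have "\<dots> \<le> N * 1 + 60 * N" using dc pa cb6 pp
      by (intro add_mono mult_mono) auto
    finally show ?thesis by simp
  qed
  have c1: "\<bar>fst (Gf R \<epsilon> z - Gf R \<epsilon> z')\<bar> \<le> (Bc/R) * (21*N)"
  proof -
    define k0 where "k0 = Bc/R"
    have "fst (Gf R \<epsilon> z - Gf R \<epsilon> z') = -k0 * ((fst z - fst z') - (F0 ya - F0 yb))"
      unfolding Gf_def k0_def[symmetric] by (simp add: ya_def yb_def algebra_simps)
    then have "fst (Gf R \<epsilon> z - Gf R \<epsilon> z') = -(Bc/R) * ((fst z - fst z') - (F0 ya - F0 yb))"
      by (simp only: k0_def)
    also have "\<bar>\<dots>\<bar> = (Bc/R) * \<bar>(fst z - fst z') - (F0 ya - F0 yb)\<bar>"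
      by (simp only: abs_mult abs_minus_cancel abs_of_nonneg[OF b0(1)])
    also have "\<dots> \<le> (Bc/R) * (21*N)"
      using b0 dT0 f0 by (intro mult_left_mono) linarith+
    finally show ?thesis .
  qed
  have c2: "\<bar>fst (snd (Gf R \<epsilon> z - Gf R \<epsilon> z'))\<bar> \<le> ((Bc+6*Dc)/R) * (21*N)"
  proof -
    define k2 where "k2 = (Bc+6*Dc)/R"
    have "fst (snd (Gf R \<epsilon> z - Gf R \<epsilon> z')) = -k2 * ((fst (snd z) - fst (snd z')) - (F2 ya - F2 yb))"
      unfolding Gf_def k2_def[symmetric] by (simp add: ya_def yb_def algebra_simps)
    then have "fst (snd (Gf R \<epsilon> z - Gf R \<epsilon> z')) = -((Bc+6*Dc)/R) * ((fst (snd z) - fst (snd z')) - (F2 ya - F2 yb))"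
      by (simp only: k2_def)
    also have "\<bar>\<dots>\<bar> = ((Bc+6*Dc)/R) * \<bar>(fst (snd z) - fst (snd z')) - (F2 ya - F2 yb)\<bar>"
      by (simp only: abs_mult abs_minus_cancel abs_of_nonneg[OF b0(2)])
    also have "\<dots> \<le> ((Bc+6*Dc)/R) * (21*N)"
      using b0 dT2 f2 by (intro mult_left_mono) linarith+
    finally show ?thesis .
  qed
  have c3: "\<bar>snd (snd (Gf R \<epsilon> z - Gf R \<epsilon> z'))\<bar> \<le> \<epsilon> * (62*N)"
  proof -
    have "snd (snd (Gf R \<epsilon> z - Gf R \<epsilon> z')) = \<epsilon> * ((fst z - fst z') + (ca * p2 ya - cb * p2 yb))"
      by (simp add: Gf_def ya_def yb_def ca_def cb_def algebra_simps)
    also have "\<bar>\<dots>\<bar> = \<epsilon> * \<bar>(fst z - fst z') + (ca * p2 ya - cb * p2 yb)\<bar>"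
      using ep by (simp add: abs_mult)
    also have "\<dots> \<le> \<epsilon> * (62*N)"
      using ep dT0 prod by (intro mult_left_mono) linarith+
    finally show ?thesis .
  qed
  have "(21*(Bc/R) + 21*((Bc+6*Dc)/R) + 62*\<epsilon>) * N = (Bc/R) * (21*N) + ((Bc+6*Dc)/R) * (21*N) + \<epsilon> * (62*N)"
    by (simp only: algebra_simps)
  then show ?thesis using norm3[of "Gf R \<epsilon> z - Gf R \<epsilon> z'"] c1 c2 c3
    unfolding N_def[symmetric] by linarith
qed

lemma G_agree:
  assumes e: "goodE e" and W: "Wf e z < 1/10000"
  shows "Gf R \<epsilon> z = Vminus R \<epsilon> z"
proof -
  have r: "\<bar>snd (snd z) - e\<bar> < 1/100" by (rule region_of_W[OF W])
  have y: "23/100 \<le> snd (snd z)" "snd (snd z) \<le> 26/100" using r e unfolding goodE_def abs_less_iff by linarith+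
  then have ce: "clE (snd (snd z)) = snd (snd z)" by (simp add: clE_def)
  have "(fst (snd z) - F2 (snd (snd z)))^2 < 1/10000"
    using W zero_le_power2[of "fst z - F0 (snd (snd z))"] zero_le_power2[of "snd (snd z) - e"]
    unfolding Wf_def by linarith
  then have "(fst (snd z) - F2 (snd (snd z)))^2 < (1/100)^2" by (simp add: power_divide)
  then have "\<bar>fst (snd z) - F2 (snd (snd z))\<bar>^2 < (1/100)^2" by (simp add: power2_abs)
  then have "\<bar>fst (snd z) - F2 (snd (snd z))\<bar> < 1/100"
    by (rule power_less_imp_less_base) simp
  moreover note region_bounds[OF y]
  ultimately have "-60 \<le> fst (snd z)" "fst (snd z) \<le> -40" unfolding abs_less_iff by linarith+
  then have ct: "clT (fst (snd z)) = fst (snd z)" by (simp add: clT_def)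
  show ?thesis unfolding Gf_def Vminus_eq ce ct ..
qed

lemma V_agree:
  assumes e: "goodE e" and W: "Wf e z < 1/10000"
  shows "V R \<epsilon> z = Vminus R \<epsilon> z"
proof -
  have r: "\<bar>snd (snd z) - e\<bar> < 1/100" by (rule region_of_W[OF W])
  then have "snd (snd z) < 26/100" using e unfolding goodE_def abs_less_iff by linarith
  then have "snd (snd z) < rho" by (simp add: rho_def)
  then show ?thesis by (simp add: V_def)
qed

lemma sq3: "0 \<le> a \<Longrightarrow> 0 \<le> b \<Longrightarrow> 0 \<le> c \<Longrightarrow> (a+b+c)^2 \<le> 3*(a^2+b^2+(c::real)^2)"
proof -
  have "0 \<le> (a - b)^2 + (b - c)^2 + (a - c)^2" by simp
  then show ?thesis by (simp add: power2_eq_square algebra_simps)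
qed

lemma distW:
  fixes z :: "real \<times> real \<times> real"
  assumes e: "goodE e" and W: "Wf e z < 1/10000"
  shows "(dist z (F0 e, F2 e, e))^2 \<le> 6000 * Wf e z"
proof -
  define u where "u = fst z - F0 (snd (snd z))"
  define v where "v = fst (snd z) - F2 (snd (snd z))"
  define w where "w = snd (snd z) - e"
  have r: "\<bar>w\<bar> < 1/100" using region_of_W[OF W] by (simp add: w_def)
  have y: "23/100 \<le> snd (snd z)" "snd (snd z) \<le> 26/100" "23/100 \<le> e" "e \<le> 26/100"
    using r e unfolding goodE_def abs_less_iff w_def by linarith+
  have f0: "\<bar>F0 (snd (snd z)) - F0 e\<bar> \<le> 20 * \<bar>w\<bar>" using F0_lip[OF y] by (simp add: w_def)
  have f2: "\<bar>F2 (snd (snd z)) - F2 e\<bar> \<le> 20 * \<bar>w\<bar>" using F2_lip[OF y] by (simp add: w_def)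
  have "dist z (F0 e, F2 e, e) \<le> \<bar>fst z - F0 e\<bar> + \<bar>fst (snd z) - F2 e\<bar> + \<bar>snd (snd z) - e\<bar>"
    using norm3[of "z - (F0 e, F2 e, e)"] by (simp add: dist_norm)
  also have "\<dots> \<le> 41 * (\<bar>u\<bar> + \<bar>v\<bar> + \<bar>w\<bar>)"
    using f0 f2 unfolding u_def v_def w_def by (smt (verit))
  finally have d: "dist z (F0 e, F2 e, e) \<le> 41 * (\<bar>u\<bar> + \<bar>v\<bar> + \<bar>w\<bar>)" .
  have "(dist z (F0 e, F2 e, e))^2 \<le> (41 * (\<bar>u\<bar> + \<bar>v\<bar> + \<bar>w\<bar>))^2"
    using d by (intro power_mono) auto
  also have "\<dots> \<le> 1681 * (3 * (u^2 + v^2 + w^2))"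
  proof -
    have "(\<bar>u\<bar> + \<bar>v\<bar> + \<bar>w\<bar>)^2 \<le> 3 * (u^2 + v^2 + w^2)"
      using sq3[of "\<bar>u\<bar>" "\<bar>v\<bar>" "\<bar>w\<bar>"] by simp
    moreover have "(41 * (\<bar>u\<bar> + \<bar>v\<bar> + \<bar>w\<bar>))^2 = 1681 * (\<bar>u\<bar> + \<bar>v\<bar> + \<bar>w\<bar>)^2"
      by (simp only: power_mult_distrib) simp
    ultimately show ?thesis by linarith
  qed
  also have "\<dots> \<le> 6000 * Wf e z"
    unfolding Wf_def u_def[symmetric] v_def[symmetric] w_def[symmetric] by simp
  finally show ?thesis .
qed

lemma Wdist:
  fixes z :: "real \<times> real \<times> real"
  assumes e: "goodE e" and d: "dist z (F0 e, F2 e, e) \<le> 1/100"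
  shows "Wf e z \<le> 900 * (dist z (F0 e, F2 e, e))^2"
proof -
  define d where "d = dist z (F0 e, F2 e, e)"
  have c: "\<bar>fst z - F0 e\<bar> \<le> d" "\<bar>fst (snd z) - F2 e\<bar> \<le> d" "\<bar>snd (snd z) - e\<bar> \<le> d"
    using comp_le[of "z - (F0 e, F2 e, e)"] by (auto simp: d_def dist_norm)
  have y: "23/100 \<le> snd (snd z)" "snd (snd z) \<le> 26/100" "23/100 \<le> e" "e \<le> 26/100"
    using c(3) d e unfolding goodE_def abs_le_iff d_def by linarith+
  have f0: "\<bar>F0 (snd (snd z)) - F0 e\<bar> \<le> 20 * d" using F0_lip[OF y] c(3) by (smt (verit))
  have f2: "\<bar>F2 (snd (snd z)) - F2 e\<bar> \<le> 20 * d" using F2_lip[OF y] c(3) by (smt (verit))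
  have u: "\<bar>fst z - F0 (snd (snd z))\<bar> \<le> 21 * d" using c(1) f0 by (smt (verit))
  have v: "\<bar>fst (snd z) - F2 (snd (snd z))\<bar> \<le> 21 * d" using c(2) f2 by (smt (verit))
  have u2: "(fst z - F0 (snd (snd z)))^2 \<le> (21*d)^2"
    using power_mono[OF u, of 2] by (simp add: power2_abs)
  have v2: "(fst (snd z) - F2 (snd (snd z)))^2 \<le> (21*d)^2"
    using power_mono[OF v, of 2] by (simp add: power2_abs)
  have w2: "(snd (snd z) - e)^2 \<le> d^2"
    using power_mono[OF c(3), of 2] by (simp add: power2_abs)
  have "Wf e z \<le> (21*d)^2 + (21*d)^2 + d^2" unfolding Wf_def using u2 v2 w2 by linarith
  also have "\<dots> \<le> 900 * d^2" by (simp add: power2_eq_square)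
  finally show ?thesis by (simp add: d_def)
qed

lemma sol_restrict: "is_solution_on F x {0..} \<Longrightarrow> is_solution_on F x {0..T}"
  unfolding is_solution_on_def
  apply (intro ballI)
  apply (rule has_vector_derivative_within_subset[where S="{0..}"])
  by auto

lemma exp_lim: "0 < k \<Longrightarrow> ((\<lambda>t. sqrt (C * exp (-k*t))) \<longlongrightarrow> 0) at_top"
proof -
  assume k: "0 < k"
  have "((\<lambda>t. exp ((-k)*t)) \<longlongrightarrow> 0) at_top"
    by (rule filterlim_compose[OF exp_at_bot filterlim_tendsto_neg_mult_at_bot[OF tendsto_const _ filterlim_ident]])
       (use k in simp)
  then have "((\<lambda>t. C * exp ((-k)*t)) \<longlongrightarrow> C * 0) at_top" by (intro tendsto_mult tendsto_const)
  then have "((\<lambda>t. sqrt (C * exp ((-k)*t))) \<longlongrightarrow> sqrt (C * 0)) at_top" by (rule tendsto_real_sqrt)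
  then show ?thesis by simp
qed

theorem proposition4:
  fixes R :: real
  assumes "R > 0"
  shows "\<exists>\<epsilon>0>0. \<forall>\<epsilon>. 0 < \<epsilon> \<and> \<epsilon> < \<epsilon>0 \<longrightarrow>
           (\<exists>p :: real \<times> real \<times> real.
              0 < snd (snd p) \<and> snd (snd p) < rho \<and>
              asymptotically_stable_equilibrium (V R \<epsilon>) p)"
proof -
  have R: "0 < R" using assms .
  obtain e where e: "goodE e" using hh_root unfolding goodE_def by blast
  define \<epsilon>0 where "\<epsilon>0 = (Bc/R)/79380"
  have e0: "\<epsilon>0 > 0" using R by (simp add: \<epsilon>0_def Bc_def)
  show ?thesis
  proof (intro exI[of _ \<epsilon>0] conjI allI impI e0)
    fix \<epsilon> :: real assume \<epsilon>: "0 < \<epsilon> \<and> \<epsilon> < \<epsilon>0"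
    have ep: "0 < \<epsilon>" "79380*\<epsilon> \<le> Bc/R" using \<epsilon> by (auto simp: \<epsilon>0_def)
    define p where "p = (F0 e, F2 e, e)"
    have Wp: "Wf e p = 0" by (simp add: Wf_def p_def)
    show "\<exists>p :: real \<times> real \<times> real. 0 < snd (snd p) \<and> snd (snd p) < rho \<and> asymptotically_stable_equilibrium (V R \<epsilon>) p"
    proof (intro exI[of _ p] conjI)
      show "0 < snd (snd p)" using e by (auto simp: p_def goodE_def)
      have "e < 26/100" using e by (auto simp: goodE_def)
      then show "snd (snd p) < rho" by (simp add: p_def rho_def)
      show "asymptotically_stable_equilibrium (V R \<epsilon>) p"
        unfolding asymptotically_stable_equilibrium_def
      proof (intro conjI)
        have "V R \<epsilon> p = Vminus R \<epsilon> p" using V_agree[OF e] Wp by simp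
        also have "\<dots> = 0"
          using e unfolding Vminus_eq p_def goodE_def hh_def Tc_def by (simp add: zero_prod_def)
        finally show "V R \<epsilon> p = 0" .
      next
        show "lyapunov_stable (V R \<epsilon>) p"
          unfolding lyapunov_stable_def
        proof (intro allI impI)
          fix ee :: real assume ee: "0 < ee"
          define d where "d = min (1/3100) (ee/2400)"
          have d0: "0 < d" using ee by (simp add: d_def)
          show "\<exists>d>0. \<forall>x T. 0 \<le> T \<longrightarrow> is_solution_on (V R \<epsilon>) x {0..T} \<longrightarrow> dist (x 0) p < d \<longrightarrow>
              (\<forall>t\<in>{0..T}. dist (x t) p < ee)"
          proof (intro exI[of _ d] conjI allI impI ballI d0)
            fix x :: "real \<Rightarrow> real \<times> real \<times> real" and T t :: real
            assume T: "0 \<le> T" and sol: "is_solution_on (V R \<epsilon>) x {0..T}" and dx: "dist (x 0) p < d"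
              and t: "t \<in> {0..T}"
            have dle: "dist (x 0) p \<le> 1/100" using dx by (simp add: d_def)
            have Wd: "Wf e (x 0) \<le> 900 * (dist (x 0) p)^2" using Wdist[OF e] dle by (simp add: p_def)
            have dd: "(dist (x 0) p)^2 \<le> d^2" using dx by (intro power_mono) auto
            have d1': "d^2 \<le> (1/3100)^2" using d0 by (intro power_mono) (auto simp: d_def)
            have d1: "d^2 \<le> 1/9610000" using d1' by (simp add: power_divide)
            have d2: "d^2 \<le> (ee/2400)^2" using d0 by (intro power_mono) (auto simp: d_def)
            have W0: "Wf e (x 0) < 1/10000" using Wd dd d1 by linarith
            have dec: "Wf e (x t) \<le> Wf e (x 0) * exp (-(17*\<epsilon>)*t)"
              using decay(2)[OF R ep e sol V_agree[OF e] W0 t] .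
            have "Wf e (x 0) * exp (-(17*\<epsilon>)*t) \<le> Wf e (x 0) * 1"
              using ep t by (intro mult_left_mono) (auto simp: Wf_def)
            then have Wt: "Wf e (x t) \<le> Wf e (x 0)" using dec by simp
            have Wt1: "Wf e (x t) < 1/10000" using decay(1)[OF R ep e sol V_agree[OF e] W0 t] .
            have "(dist (x t) p)^2 \<le> 6000 * Wf e (x t)" using distW[OF e Wt1] by (simp add: p_def)
            also have "\<dots> \<le> 6000 * (900 * (ee/2400)^2)" using Wt Wd dd d2 by linarith
            also have "\<dots> = (15/16) * ee^2" by (simp add: power_divide)
            also have "\<dots> < ee^2" using ee by simp
            finally have sq: "(dist (x t) p)^2 < ee^2" .
            show "dist (x t) p < ee" using power_less_imp_less_base[OF sq] ee by simp
          qed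
        qed
      next
        show "locally_attractive (V R \<epsilon>) p"
          unfolding locally_attractive_def
        proof (intro exI[of _ "1/3100"] conjI allI impI)
          show "0 < (1::real)/3100" by simp
        next
          fix x0 :: "real \<times> real \<times> real"
          assume dx: "dist x0 p < 1/3100"
          have Wd: "Wf e x0 \<le> 900 * (dist x0 p)^2" using Wdist[OF e, of x0] dx by (simp add: p_def)
          have dd': "(dist x0 p)^2 \<le> (1/3100)^2" using dx by (intro power_mono) auto
          have dd: "(dist x0 p)^2 \<le> 1/9610000" using dd' by (simp add: power_divide)
          have W0: "Wf e x0 < 1/10000" using Wd dd by linarith
          define L where "L = 21*(Bc/R) + 21*((Bc+6*Dc)/R) + 62*\<epsilon>"
          have L0: "0 < L" using R ep by (simp add: L_def Bc_def Dc_def)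
          have lip: "\<And>z z'. norm (Gf R \<epsilon> z - Gf R \<epsilon> z') \<le> L * norm (z - z')"
            using Gf_lip[OF R ep(1)] unfolding L_def .
          obtain x where xs: "is_solution_on (Gf R \<epsilon>) x {0..}" "x 0 = x0"
            using ode_exists[OF L0 lip] by blast
          have "is_solution_on (V R \<epsilon>) x {0..}"
            unfolding is_solution_on_def
          proof
            fix t :: real assume t: "t \<in> {0..}"
            have solt: "is_solution_on (Gf R \<epsilon>) x {0..t}" by (rule sol_restrict[OF xs(1)])
            have "Wf e (x t) < 1/10000"
              by (rule decay(1)[OF R ep e solt G_agree[OF e]]) (use W0 xs(2) t in auto)
            then have "Gf R \<epsilon> (x t) = V R \<epsilon> (x t)" using G_agree[OF e, of "x t"] V_agree[OF e, of "x t"] by metis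
            then show "(x has_vector_derivative V R \<epsilon> (x t)) (at t within {0..})"
              using xs(1) t unfolding is_solution_on_def by metis
          qed
          then show "\<exists>x. is_solution_on (V R \<epsilon>) x {0..} \<and> x 0 = x0" using xs(2) by blast
        next
          fix x0 :: "real \<times> real \<times> real" and x :: "real \<Rightarrow> real \<times> real \<times> real"
          assume dx: "dist x0 p < 1/3100" and sol: "is_solution_on (V R \<epsilon>) x {0..}" and x0: "x 0 = x0"
          have Wd: "Wf e x0 \<le> 900 * (dist x0 p)^2" using Wdist[OF e, of x0] dx by (simp add: p_def)
          have dd': "(dist x0 p)^2 \<le> (1/3100)^2" using dx by (intro power_mono) auto
          have dd: "(dist x0 p)^2 \<le> 1/9610000" using dd' by (simp add: power_divide)
          have W0: "Wf e x0 < 1/10000" using Wd dd by linarith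
          show "(x \<longlongrightarrow> p) at_top"
          proof -
            have bnd: "dist (x t) p \<le> sqrt (6000 * Wf e x0 * exp (-(17*\<epsilon>)*t))" if t: "0 \<le> t" for t
            proof -
              have solt: "is_solution_on (V R \<epsilon>) x {0..t}" by (rule sol_restrict[OF sol])
              have W0': "Wf e (x 0) < 1/10000" using W0 x0 by simp
              have dec: "Wf e (x t) \<le> Wf e x0 * exp (-(17*\<epsilon>)*t)"
                using decay(2)[OF R ep e solt V_agree[OF e] W0'] t x0 by simp
              have Wt1: "Wf e (x t) < 1/10000" using decay(1)[OF R ep e solt V_agree[OF e] W0'] t by simp
              have "(dist (x t) p)^2 \<le> 6000 * Wf e (x t)" using distW[OF e Wt1] by (simp add: p_def)
              also have "\<dots> \<le> 6000 * Wf e x0 * exp (-(17*\<epsilon>)*t)" using dec by simp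
              finally show ?thesis by (rule real_le_rsqrt)
            qed
            have k0: "0 < 17*\<epsilon>" using ep by simp
            have lim: "((\<lambda>t. sqrt (6000 * Wf e x0 * exp (-(17*\<epsilon>)*t))) \<longlongrightarrow> 0) at_top"
              by (rule exp_lim[OF k0])
            have ev1: "\<forall>\<^sub>F t in at_top. (\<lambda>_. 0::real) t \<le> dist (x t) p" by simp
            have ev2: "\<forall>\<^sub>F t in at_top. dist (x t) p \<le> sqrt (6000 * Wf e x0 * exp (-(17*\<epsilon>)*t))"
              unfolding eventually_at_top_linorder by (intro exI[of _ 0] allI impI bnd)
            have "((\<lambda>t. dist (x t) p) \<longlongrightarrow> 0) at_top"
              by (rule tendsto_sandwich[OF ev1 ev2 tendsto_const lim])
            then show "(x \<longlongrightarrow> p) at_top" by (rule tendsto_dist_iff[THEN iffD2])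
          qed
        qed
      qed
    qed
  qed
qed

end
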